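(* Let $(X,(\cdot,\cdot|\cdot))$ be a 2-inner product space over $\mathbb{K}\in\{\mathbb{R},\mathbb{C}\}$, let $n$ be a positive integer, let $z_1,\dots,z_n,z\in X$ and $\mu_1,\dots,\mu_n\in\mathbb{K}$. Define $A_1=\max_{1\le i\le n}|\mu_i|^2\sum_{i=1}^n\|z_i|z\|^2$; $A_2(\alpha)=\big(\sum_{i=1}^n|\mu_i|^{2\alpha}\big)^{1/\alpha}\big(\sum_{i=1}^n\|z_i|z\|^{2\beta}\big)^{1/\beta}$ for $\alpha>1$, $\frac1\alpha+\frac1\beta=1$; $A_3=\sum_{i=1}^n|\mu_i|^2\max_{1\le i\le n}\|z_i|z\|^2$; and $B_1=\max_{1\le i\le n}|\mu_i|^2\sum_{1\le i\ne j\le n}|(z_i,z_j|z)|$; $B_2(\gamma)=(n-1)^{1/\gamma}\big(\sum_{i=1}^n|\mu_i|^{2\gamma}\big)^{1/\gamma}\big(\sum_{1\le i\ne j\le n}|(z_i,z_j|z)|^{\delta}\big)^{1/\delta}$ for $\gamma>1$, $\frac1\gamma+\frac1\delta=1$; $B_3=(n-1)\sum_{i=1}^n|\mu_i|^2\max_{1\le i\ne j\le n}|(z_i,z_j|z)|$. Then for every choice of $A\in\{A_1,A_2(\alpha),A_3\}$ and $B\in\{B_1,B_2(\gamma),B_3\}$ (with any admissible $\alpha,\gamma$), \[ \Big\|\sum_{i=1}^n\mu_iz_i\,\Big|\,z\Big\|^2\le A+B. \]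
   Context: A 2-inner product on a linear space $X$ of dimension greater than $1$ over $\mathbb{K}$ ($\mathbb{K}=\mathbb{R}$ or $\mathbb{C}$) is a function $(\cdot,\cdot|\cdot):X\times X\times X\to\mathbb{K}$ such that for all $x,x',y,z\in X$ and $\alpha\in\mathbb{K}$: (i) $(x,x|z)\ge 0$, and $(x,x|z)=0$ iff $x$ and $z$ are linearly dependent; (ii) $(x,x|z)=(z,z|x)$; (iii) $(y,x|z)=\overline{(x,y|z)}$; (iv) $(\alpha x,y|z)=\alpha(x,y|z)$; (v) $(x+x',y|z)=(x,y|z)+(x',y|z)$. The associated 2-norm is $\|x|z\|=\sqrt{(x,x|z)}$. Sums and maxima indexed by $1\le i\ne j\le n$ run over all ordered pairs $(i,j)$ with $i\ne j$. *)

theory Defs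
  imports "HOL-Analysis.Analysis"
begin

definition lin_dep2_real :: "'a::real_vector \<Rightarrow> 'a \<Rightarrow> bool" where
  "lin_dep2_real x z \<longleftrightarrow> (\<exists>a b::real. (a \<noteq> 0 \<or> b \<noteq> 0) \<and> a *\<^sub>R x + b *\<^sub>R z = 0)"

definition lin_dep2_complex :: "(complex \<Rightarrow> 'a::ab_group_add \<Rightarrow> 'a) \<Rightarrow> 'a \<Rightarrow> 'a \<Rightarrow> bool" where
  "lin_dep2_complex sc x z \<longleftrightarrow> (\<exists>a b::complex. (a \<noteq> 0 \<or> b \<noteq> 0) \<and> sc a x + sc b z = 0)"

definition two_inner_product_real :: "('a::real_vector \<Rightarrow> 'a \<Rightarrow> 'a \<Rightarrow> real) \<Rightarrow> bool" where
  "two_inner_product_real ip \<longleftrightarrow>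
     (\<exists>x y::'a. \<not> lin_dep2_real x y) \<and>
     (\<forall>x z. ip x x z \<ge> 0 \<and> (ip x x z = 0 \<longleftrightarrow> lin_dep2_real x z)) \<and>
     (\<forall>x z. ip x x z = ip z z x) \<and>
     (\<forall>x y z. ip y x z = ip x y z) \<and>
     (\<forall>a x y z. ip (a *\<^sub>R x) y z = a * ip x y z) \<and>
     (\<forall>x x' y z. ip (x + x') y z = ip x y z + ip x' y z)"

definition two_inner_product_complex ::
    "(complex \<Rightarrow> 'a::ab_group_add \<Rightarrow> 'a) \<Rightarrow> ('a \<Rightarrow> 'a \<Rightarrow> 'a \<Rightarrow> complex) \<Rightarrow> bool" where
  "two_inner_product_complex sc ip \<longleftrightarrow>
     vector_space sc \<and>
     (\<exists>x y::'a. \<not> lin_dep2_complex sc x y) \<and>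
     (\<forall>x z. Im (ip x x z) = 0 \<and> Re (ip x x z) \<ge> 0 \<and> (ip x x z = 0 \<longleftrightarrow> lin_dep2_complex sc x z)) \<and>
     (\<forall>x z. ip x x z = ip z z x) \<and>
     (\<forall>x y z. ip y x z = cnj (ip x y z)) \<and>
     (\<forall>a x y z. ip (sc a x) y z = a * ip x y z) \<and>
     (\<forall>x x' y z. ip (x + x') y z = ip x y z + ip x' y z)"

text \<open>The associated 2-norm \<open>\<parallel>x|z\<parallel> = sqrt (x,x|z)\<close>; since \<open>(x,x|z)\<close> is a nonnegative
  real number, it equals its modulus.\<close>

definition two_norm :: "('a \<Rightarrow> 'a \<Rightarrow> 'a \<Rightarrow> 'k::real_normed_field) \<Rightarrow> 'a \<Rightarrow> 'a \<Rightarrow> real" where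
  "two_norm ip x z = sqrt (norm (ip x x z))"

definition offdiag :: "nat \<Rightarrow> (nat \<times> nat) set" where
  "offdiag n = {(i, j). i \<in> {1..n} \<and> j \<in> {1..n} \<and> i \<noteq> j}"

definition A1 :: "('a \<Rightarrow> 'a \<Rightarrow> 'a \<Rightarrow> 'k::real_normed_field) \<Rightarrow> nat \<Rightarrow> (nat \<Rightarrow> 'a) \<Rightarrow> 'a \<Rightarrow> (nat \<Rightarrow> 'k) \<Rightarrow> real" where
  "A1 ip n zs z mu = (MAX i\<in>{1..n}. norm (mu i) ^ 2) * (\<Sum>i=1..n. two_norm ip (zs i) z ^ 2)"

definition A2 :: "('a \<Rightarrow> 'a \<Rightarrow> 'a \<Rightarrow> 'k::real_normed_field) \<Rightarrow> nat \<Rightarrow> (nat \<Rightarrow> 'a) \<Rightarrow> 'a \<Rightarrow> (nat \<Rightarrow> 'k) \<Rightarrow> real \<Rightarrow> real \<Rightarrow> real" where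
  "A2 ip n zs z mu \<alpha> \<beta> =
     (\<Sum>i=1..n. norm (mu i) powr (2 * \<alpha>)) powr (1 / \<alpha>) *
     (\<Sum>i=1..n. two_norm ip (zs i) z powr (2 * \<beta>)) powr (1 / \<beta>)"

definition A3 :: "('a \<Rightarrow> 'a \<Rightarrow> 'a \<Rightarrow> 'k::real_normed_field) \<Rightarrow> nat \<Rightarrow> (nat \<Rightarrow> 'a) \<Rightarrow> 'a \<Rightarrow> (nat \<Rightarrow> 'k) \<Rightarrow> real" where
  "A3 ip n zs z mu = (\<Sum>i=1..n. norm (mu i) ^ 2) * (MAX i\<in>{1..n}. two_norm ip (zs i) z ^ 2)"

definition B1 :: "('a \<Rightarrow> 'a \<Rightarrow> 'a \<Rightarrow> 'k::real_normed_field) \<Rightarrow> nat \<Rightarrow> (nat \<Rightarrow> 'a) \<Rightarrow> 'a \<Rightarrow> (nat \<Rightarrow> 'k) \<Rightarrow> real" where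
  "B1 ip n zs z mu = (MAX i\<in>{1..n}. norm (mu i) ^ 2) *
     (\<Sum>(i, j)\<in>offdiag n. norm (ip (zs i) (zs j) z))"

definition B2 :: "('a \<Rightarrow> 'a \<Rightarrow> 'a \<Rightarrow> 'k::real_normed_field) \<Rightarrow> nat \<Rightarrow> (nat \<Rightarrow> 'a) \<Rightarrow> 'a \<Rightarrow> (nat \<Rightarrow> 'k) \<Rightarrow> real \<Rightarrow> real \<Rightarrow> real" where
  "B2 ip n zs z mu \<gamma> \<delta> =
     (real n - 1) powr (1 / \<gamma>) *
     (\<Sum>i=1..n. norm (mu i) powr (2 * \<gamma>)) powr (1 / \<gamma>) *
     (\<Sum>(i, j)\<in>offdiag n. norm (ip (zs i) (zs j) z) powr \<delta>) powr (1 / \<delta>)"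

definition B3 :: "('a \<Rightarrow> 'a \<Rightarrow> 'a \<Rightarrow> 'k::real_normed_field) \<Rightarrow> nat \<Rightarrow> (nat \<Rightarrow> 'a) \<Rightarrow> 'a \<Rightarrow> (nat \<Rightarrow> 'k) \<Rightarrow> real" where
  "B3 ip n zs z mu = (real n - 1) * (\<Sum>i=1..n. norm (mu i) ^ 2) *
     (if offdiag n = {} then 0 else (MAX (i, j)\<in>offdiag n. norm (ip (zs i) (zs j) z)))"

definition cor24_bound :: "('a \<Rightarrow> 'a \<Rightarrow> 'a \<Rightarrow> 'k::real_normed_field) \<Rightarrow> nat \<Rightarrow> (nat \<Rightarrow> 'a) \<Rightarrow> 'a \<Rightarrow> (nat \<Rightarrow> 'k)
    \<Rightarrow> 'a \<Rightarrow> real \<Rightarrow> real \<Rightarrow> real \<Rightarrow> real \<Rightarrow> bool" where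
  "cor24_bound ip n zs z mu v \<alpha> \<beta> \<gamma> \<delta> \<longleftrightarrow>
     (\<forall>A\<in>{A1 ip n zs z mu, A2 ip n zs z mu \<alpha> \<beta>, A3 ip n zs z mu}.
      \<forall>B\<in>{B1 ip n zs z mu, B2 ip n zs z mu \<gamma> \<delta>, B3 ip n zs z mu}.
        two_norm ip v z ^ 2 \<le> A + B)"

end

theory Submission
  imports Defs
begin

lemma holder_sum:
  fixes f g :: "'i \<Rightarrow> real"
  assumes fin: "finite I" and p: "p > 1" and q: "q > 1" and pq: "1/p + 1/q = 1"
    and f0: "\<And>i. i \<in> I \<Longrightarrow> f i \<ge> 0" and g0: "\<And>i. i \<in> I \<Longrightarrow> g i \<ge> 0"
  shows "(\<Sum>i\<in>I. f i * g i) \<le> (\<Sum>i\<in>I. f i powr p) powr (1/p) * (\<Sum>i\<in>I. g i powr q) powr (1/q)"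
proof -
  define F where "F = (\<Sum>i\<in>I. f i powr p)"
  define G where "G = (\<Sum>i\<in>I. g i powr q)"
  have F0: "F \<ge> 0" unfolding F_def by (simp add: sum_nonneg)
  have G0: "G \<ge> 0" unfolding G_def by (simp add: sum_nonneg)
  show ?thesis
  proof (cases "F = 0 \<or> G = 0")
    case True
    then have "\<forall>i\<in>I. f i * g i = 0"
    proof
      assume "F = 0"
      then have "\<forall>i\<in>I. f i powr p = 0" unfolding F_def using fin
        by (subst (asm) sum_nonneg_eq_0_iff) auto
      then show ?thesis by auto
    next
      assume "G = 0"
      then have "\<forall>i\<in>I. g i powr q = 0" unfolding G_def using fin
        by (subst (asm) sum_nonneg_eq_0_iff) auto
      then show ?thesis by auto
    qed
    then have "(\<Sum>i\<in>I. f i * g i) = 0" by (intro sum.neutral) simp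
    then show ?thesis by simp
  next
    case False
    with F0 G0 have Fp: "F > 0" and Gp: "G > 0" by auto
    define Fr where "Fr = F powr (1/p)"
    define Gr where "Gr = G powr (1/q)"
    have Frp: "Fr > 0" and Grp: "Gr > 0" using Fp Gp by (auto simp: Fr_def Gr_def)
    have FrP: "Fr powr p = F" using Fp p by (simp add: Fr_def powr_powr)
    have GrP: "Gr powr q = G" using Gp q by (simp add: Gr_def powr_powr)
    have young: "(f i / Fr) * (g i / Gr) \<le> f i powr p / (p * F) + g i powr q / (q * G)" if "i \<in> I" for i
    proof -
      have "(f i / Fr) * (g i / Gr) \<le> (f i / Fr) powr p / p + (g i / Gr) powr q / q"
        by (rule Youngs_inequality) (use p q pq f0 g0 that Frp Grp in auto)
      also have "\<dots> = f i powr p / (p * F) + g i powr q / (q * G)"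
        using f0[OF that] g0[OF that] Frp Grp FrP GrP by (simp add: powr_divide mult.commute)
      finally show ?thesis .
    qed
    have "(\<Sum>i\<in>I. f i * g i) / (Fr * Gr) = (\<Sum>i\<in>I. (f i / Fr) * (g i / Gr))"
      by (simp add: sum_divide_distrib)
    also have "\<dots> \<le> (\<Sum>i\<in>I. f i powr p / (p * F) + g i powr q / (q * G))"
      by (rule sum_mono) (rule young)
    also have "\<dots> = F / (p * F) + G / (q * G)"
      by (simp add: sum.distrib F_def G_def sum_divide_distrib)
    also have "\<dots> = 1" using Fp Gp pq by simp
    finally have "(\<Sum>i\<in>I. f i * g i) / (Fr * Gr) \<le> 1" .
    then show ?thesis using Frp Grp by (simp add: Fr_def Gr_def F_def G_def divide_le_eq)
  qed
qed

lemma offdiag_Sigma: "offdiag n = Sigma {1..n} (\<lambda>i. {1..n} - {i})"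
  unfolding offdiag_def by auto

lemma finite_offdiag: "finite (offdiag n)"
  unfolding offdiag_Sigma by auto

lemma sum_offdiag_fst:
  fixes h :: "nat \<Rightarrow> real"
  shows "(\<Sum>(i, j)\<in>offdiag n. h i) = (real n - 1) * (\<Sum>i=1..n. h i)"
proof (cases "n = 0")
  case True then show ?thesis by (simp add: offdiag_def)
next
  case False
  have "(\<Sum>(i, j)\<in>offdiag n. h i) = (\<Sum>i=1..n. \<Sum>j\<in>{1..n} - {i}. h i)"
    unfolding offdiag_Sigma by (subst sum.Sigma) auto
  also have "\<dots> = (\<Sum>i=1..n. (real n - 1) * h i)"
    by (rule sum.cong) (auto simp: of_nat_diff)
  finally show ?thesis by (simp add: sum_distrib_left)
qed

lemma sum_diag_split:
  fixes h :: "nat \<Rightarrow> nat \<Rightarrow> real"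
  shows "(\<Sum>i=1..n. \<Sum>j=1..n. h i j) = (\<Sum>i=1..n. h i i) + (\<Sum>(i, j)\<in>offdiag n. h i j)"
proof -
  have e: "{1..n} \<times> {1..n} = (\<lambda>i. (i, i)) ` {1..n} \<union> offdiag n"
    unfolding offdiag_def by auto
  have "(\<Sum>i=1..n. \<Sum>j=1..n. h i j) = (\<Sum>(i, j)\<in>{1..n} \<times> {1..n}. h i j)"
    by (simp add: sum.cartesian_product)
  also have "\<dots> = (\<Sum>(i, j)\<in>(\<lambda>i. (i, i)) ` {1..n}. h i j) + (\<Sum>(i, j)\<in>offdiag n. h i j)"
    unfolding e by (rule sum.union_disjoint) (auto simp: offdiag_def[symmetric] finite_offdiag, auto simp: offdiag_def)
  also have "(\<Sum>(i, j)\<in>(\<lambda>i. (i, i)) ` {1..n}. h i j) = (\<Sum>i=1..n. h i i)"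
    by (subst sum.reindex) (auto simp: inj_on_def)
  finally show ?thesis .
qed

lemma offdiag_swap:
  fixes c :: "nat \<Rightarrow> nat \<Rightarrow> real" and a :: "nat \<Rightarrow> real"
  assumes a0: "\<And>i. a i \<ge> 0" and c0: "\<And>i j. c i j \<ge> 0" and cs: "\<And>i j. c j i = c i j"
  shows "(\<Sum>(i, j)\<in>offdiag n. a i * a j * c i j) \<le> (\<Sum>(i, j)\<in>offdiag n. a i ^ 2 * c i j)"
proof -
  have sw: "(\<Sum>(i, j)\<in>offdiag n. a j ^ 2 * c i j) = (\<Sum>(i, j)\<in>offdiag n. a i ^ 2 * c i j)"
  proof -
    have im: "prod.swap ` offdiag n = offdiag n" unfolding offdiag_def by auto
    have "(\<Sum>(i, j)\<in>offdiag n. a i ^ 2 * c i j) = (\<Sum>(i, j)\<in>prod.swap ` offdiag n. a i ^ 2 * c i j)"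
      by (simp add: im)
    also have "\<dots> = (\<Sum>(i, j)\<in>offdiag n. a j ^ 2 * c j i)"
      by (subst sum.reindex) (auto simp: case_prod_beta)
    finally show ?thesis by (simp add: cs)
  qed
  have "(\<Sum>(i, j)\<in>offdiag n. a i * a j * c i j) \<le> (\<Sum>(i, j)\<in>offdiag n. (a i ^ 2 * c i j) / 2 + (a j ^ 2 * c i j) / 2)"
  proof (rule sum_mono, clarify)
    fix i j
    have "a i * a j \<le> (a i ^ 2 + a j ^ 2) / 2"
      using sum_squares_bound[of "a i" "a j"] by (simp add: power2_eq_square)
    then have "a i * a j * c i j \<le> (a i ^ 2 + a j ^ 2) / 2 * c i j"
      using c0 by (rule mult_right_mono)
    then show "a i * a j * c i j \<le> a i ^ 2 * c i j / 2 + a j ^ 2 * c i j / 2"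
      by (simp add: field_simps)
  qed
  also have "\<dots> = (\<Sum>(i, j)\<in>offdiag n. a i ^ 2 * c i j)"
    using sw by (simp add: sum.distrib case_prod_beta sum_divide_distrib[symmetric])
  finally show ?thesis .
qed

lemma conj_exp: "(p::real) > 1 \<Longrightarrow> 1/p + 1/q = 1 \<Longrightarrow> q > 1"
proof -
  assume p: "p > 1" and pq: "1/p + 1/q = 1"
  have "1/q = 1 - 1/p" using pq by simp
  moreover have "0 < 1 - 1/p" "1 - 1/p < 1" using p by auto
  ultimately have "0 < 1/q" "1/q < 1" by auto
  then show "q > 1" by (simp add: divide_less_eq split: if_splits)
qed

lemma powr_sq: "(x::real) \<ge> 0 \<Longrightarrow> (x ^ 2) powr r = x powr (2 * r)"
  by (cases "x = 0") (auto simp: powr_powr[symmetric] powr_realpow)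

lemma diag_bounds:
  fixes a t :: "nat \<Rightarrow> real"
  assumes a0: "\<And>i. a i \<ge> 0" and t0: "\<And>i. t i \<ge> 0" and n: "n \<ge> 1"
    and al: "\<alpha> > 1" and ab: "1 / \<alpha> + 1 / \<beta> = 1"
  shows "(\<Sum>i=1..n. a i ^ 2 * t i ^ 2) \<le> (MAX i\<in>{1..n}. a i ^ 2) * (\<Sum>i=1..n. t i ^ 2)"
    and "(\<Sum>i=1..n. a i ^ 2 * t i ^ 2) \<le> (\<Sum>i=1..n. a i ^ 2) * (MAX i\<in>{1..n}. t i ^ 2)"
    and "(\<Sum>i=1..n. a i ^ 2 * t i ^ 2) \<le> (\<Sum>i=1..n. a i powr (2 * \<alpha>)) powr (1 / \<alpha>) *
     (\<Sum>i=1..n. t i powr (2 * \<beta>)) powr (1 / \<beta>)"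
proof -
  have ne: "{1..n} \<noteq> {}" using n by auto
  show "(\<Sum>i=1..n. a i ^ 2 * t i ^ 2) \<le> (MAX i\<in>{1..n}. a i ^ 2) * (\<Sum>i=1..n. t i ^ 2)"
    unfolding sum_distrib_left
    by (rule sum_mono, rule mult_right_mono) (use ne in auto)
  show "(\<Sum>i=1..n. a i ^ 2 * t i ^ 2) \<le> (\<Sum>i=1..n. a i ^ 2) * (MAX i\<in>{1..n}. t i ^ 2)"
    unfolding sum_distrib_right
    by (rule sum_mono, rule mult_left_mono) (use ne in auto)
  have be: "\<beta> > 1" using conj_exp[OF al ab] .
  have "(\<Sum>i=1..n. a i ^ 2 * t i ^ 2) \<le> (\<Sum>i=1..n. (a i ^ 2) powr \<alpha>) powr (1 / \<alpha>) *
     (\<Sum>i=1..n. (t i ^ 2) powr \<beta>) powr (1 / \<beta>)"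
    by (rule holder_sum) (use al be ab in auto)
  then show "(\<Sum>i=1..n. a i ^ 2 * t i ^ 2) \<le> (\<Sum>i=1..n. a i powr (2 * \<alpha>)) powr (1 / \<alpha>) *
     (\<Sum>i=1..n. t i powr (2 * \<beta>)) powr (1 / \<beta>)"
    using a0 t0 by (simp add: powr_sq)
qed

lemma offdiag_bounds:
  fixes a :: "nat \<Rightarrow> real" and c :: "nat \<Rightarrow> nat \<Rightarrow> real"
  assumes a0: "\<And>i. a i \<ge> 0" and c0: "\<And>i j. c i j \<ge> 0" and cs: "\<And>i j. c j i = c i j"
    and n: "n \<ge> 1"
    and ga: "\<gamma> > 1" and gd: "1 / \<gamma> + 1 / \<delta> = 1"
  shows "(\<Sum>(i, j)\<in>offdiag n. a i * a j * c i j) \<le> (MAX i\<in>{1..n}. a i ^ 2) * (\<Sum>(i, j)\<in>offdiag n. c i j)"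
    and "(\<Sum>(i, j)\<in>offdiag n. a i * a j * c i j) \<le> (real n - 1) powr (1 / \<gamma>) *
     (\<Sum>i=1..n. a i powr (2 * \<gamma>)) powr (1 / \<gamma>) *
     (\<Sum>(i, j)\<in>offdiag n. c i j powr \<delta>) powr (1 / \<delta>)"
    and "(\<Sum>(i, j)\<in>offdiag n. a i * a j * c i j) \<le> (real n - 1) * (\<Sum>i=1..n. a i ^ 2) *
     (if offdiag n = {} then 0 else (MAX (i, j)\<in>offdiag n. c i j))"
proof -
  have ne: "{1..n} \<noteq> {}" using n by auto
  note sw = offdiag_swap[of a c n, OF a0 c0 cs]
  have "(\<Sum>(i, j)\<in>offdiag n. a i ^ 2 * c i j) \<le> (\<Sum>(i, j)\<in>offdiag n. (MAX i\<in>{1..n}. a i ^ 2) * c i j)"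
    by (rule sum_mono, clarify, rule mult_right_mono) (use ne c0 in \<open>auto simp: offdiag_def\<close>)
  then show "(\<Sum>(i, j)\<in>offdiag n. a i * a j * c i j) \<le> (MAX i\<in>{1..n}. a i ^ 2) * (\<Sum>(i, j)\<in>offdiag n. c i j)"
    using sw by (simp add: sum_distrib_left case_prod_beta)
  have de: "\<delta> > 1" using conj_exp[OF ga gd] .
  have "(\<Sum>(i, j)\<in>offdiag n. a i ^ 2 * c i j) = (\<Sum>x\<in>offdiag n. a (fst x) ^ 2 * c (fst x) (snd x))"
    by (simp add: case_prod_beta)
  also have "\<dots> \<le> (\<Sum>x\<in>offdiag n. (a (fst x) ^ 2) powr \<gamma>) powr (1 / \<gamma>) *
     (\<Sum>x\<in>offdiag n. c (fst x) (snd x) powr \<delta>) powr (1 / \<delta>)"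
    by (rule holder_sum) (use ga de gd a0 c0 finite_offdiag in auto)
  also have "(\<Sum>x\<in>offdiag n. (a (fst x) ^ 2) powr \<gamma>) = (\<Sum>(i, j)\<in>offdiag n. a i powr (2 * \<gamma>))"
    using a0 by (simp add: powr_sq case_prod_beta)
  also have "\<dots> = (real n - 1) * (\<Sum>i=1..n. a i powr (2 * \<gamma>))"
    by (rule sum_offdiag_fst)
  also have "((real n - 1) * (\<Sum>i=1..n. a i powr (2 * \<gamma>))) powr (1 / \<gamma>) =
      (real n - 1) powr (1 / \<gamma>) * (\<Sum>i=1..n. a i powr (2 * \<gamma>)) powr (1 / \<gamma>)"
    using n by (auto intro!: powr_mult sum_nonneg)
  finally show "(\<Sum>(i, j)\<in>offdiag n. a i * a j * c i j) \<le> (real n - 1) powr (1 / \<gamma>) *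
     (\<Sum>i=1..n. a i powr (2 * \<gamma>)) powr (1 / \<gamma>) *
     (\<Sum>(i, j)\<in>offdiag n. c i j powr \<delta>) powr (1 / \<delta>)"
    using sw by (simp add: case_prod_beta)
  show "(\<Sum>(i, j)\<in>offdiag n. a i * a j * c i j) \<le> (real n - 1) * (\<Sum>i=1..n. a i ^ 2) *
     (if offdiag n = {} then 0 else (MAX (i, j)\<in>offdiag n. c i j))"
  proof (cases "offdiag n = {}")
    case True then show ?thesis by simp
  next
    case False
    define M where "M = (MAX (i, j)\<in>offdiag n. c i j)"
    have "(\<Sum>(i, j)\<in>offdiag n. a i ^ 2 * c i j) \<le> (\<Sum>(i, j)\<in>offdiag n. a i ^ 2 * M)"
    proof (rule sum_mono, clarify)
      fix i j assume ij: "(i, j) \<in> offdiag n"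
      have "c i j \<le> M" unfolding M_def
        using ij finite_offdiag[of n] by (intro Max_ge) auto
      then show "a i ^ 2 * c i j \<le> a i ^ 2 * M" by (simp add: mult_left_mono)
    qed
    also have "\<dots> = (real n - 1) * (\<Sum>i=1..n. a i ^ 2 * M)"
      by (rule sum_offdiag_fst)
    finally show ?thesis using sw False
      by (simp add: M_def sum_distrib_right mult.assoc)
  qed
qed

lemma two_norm_sq: "two_norm ip x z ^ 2 = norm (ip x x z)"
  unfolding two_norm_def by simp

lemma norm_double_sum_split:
  fixes g :: "nat \<Rightarrow> nat \<Rightarrow> 'k::real_normed_field" and a :: "nat \<Rightarrow> real"
    and ip :: "'a \<Rightarrow> 'a \<Rightarrow> 'a \<Rightarrow> 'k"
  assumes "\<And>i j. norm (g i j) \<le> a i * a j * norm (ip (zs i) (zs j) z)"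
  shows "norm (\<Sum>i=1..n. \<Sum>j=1..n. g i j) \<le> (\<Sum>i=1..n. a i ^ 2 * two_norm ip (zs i) z ^ 2) +
     (\<Sum>(i, j)\<in>offdiag n. a i * a j * norm (ip (zs i) (zs j) z))"
proof -
  have "norm (\<Sum>i=1..n. \<Sum>j=1..n. g i j) \<le> (\<Sum>i=1..n. norm (\<Sum>j=1..n. g i j))"
    by (rule norm_sum)
  also have "\<dots> \<le> (\<Sum>i=1..n. \<Sum>j=1..n. norm (g i j))"
    by (rule sum_mono, rule norm_sum)
  also have "\<dots> \<le> (\<Sum>i=1..n. \<Sum>j=1..n. a i * a j * norm (ip (zs i) (zs j) z))"
    by (intro sum_mono assms)
  also have "\<dots> = (\<Sum>i=1..n. a i ^ 2 * two_norm ip (zs i) z ^ 2) +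
     (\<Sum>(i, j)\<in>offdiag n. a i * a j * norm (ip (zs i) (zs j) z))"
    unfolding two_norm_sq by (subst sum_diag_split) (simp add: power2_eq_square)
  finally show ?thesis .
qed

lemma complex_expand:
  assumes ip: "two_inner_product_complex sc ip"
  shows "ip (\<Sum>i\<in>I. sc (mu i) (zs i)) (\<Sum>i\<in>I. sc (mu i) (zs i)) z =
    (\<Sum>i\<in>I. \<Sum>j\<in>I. mu i * cnj (mu j) * ip (zs i) (zs j) z)"
proof -
  have add: "\<And>x x' y. ip (x + x') y z = ip x y z + ip x' y z"
    and sc: "\<And>a x y. ip (sc a x) y z = a * ip x y z"
    and cj: "\<And>x y. ip y x z = cnj (ip x y z)"
    using ip unfolding two_inner_product_complex_def by blast+
  have z0: "ip 0 y z = 0" for y using add[of 0 0 y] by simp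
  have sl: "ip (\<Sum>i\<in>J. f i) y z = (\<Sum>i\<in>J. ip (f i) y z)" for J f y
    by (induction J rule: infinite_finite_induct) (auto simp: z0 add)
  have sr: "ip y (\<Sum>i\<in>J. f i) z = (\<Sum>i\<in>J. ip y (f i) z)" for J f y
  proof -
    have "ip y (\<Sum>i\<in>J. f i) z = cnj (ip (\<Sum>i\<in>J. f i) y z)" by (rule cj)
    also have "\<dots> = cnj (\<Sum>i\<in>J. ip (f i) y z)" by (simp only: sl)
    also have "\<dots> = (\<Sum>i\<in>J. cnj (ip (f i) y z))" by (rule cnj_sum)
    also have "\<dots> = (\<Sum>i\<in>J. ip y (f i) z)" by (simp only: cj[symmetric])
    finally show ?thesis .
  qed
  have scr: "ip y (sc a x) z = cnj a * ip y x z" for a x y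
  proof -
    have "ip y (sc a x) z = cnj (ip (sc a x) y z)" by (rule cj)
    also have "\<dots> = cnj (a * ip x y z)" by (simp only: sc)
    also have "\<dots> = cnj a * ip y x z" by (simp only: complex_cnj_mult cj[symmetric])
    finally show ?thesis .
  qed
  show ?thesis
    by (simp add: sl sr sc scr sum_distrib_left mult.assoc, subst sum.swap, simp add: ac_simps)
qed

lemma real_expand:
  fixes ip :: "'a::real_vector \<Rightarrow> 'a \<Rightarrow> 'a \<Rightarrow> real"
  assumes ip: "two_inner_product_real ip"
  shows "ip (\<Sum>i\<in>I. mu i *\<^sub>R zs i) (\<Sum>i\<in>I. mu i *\<^sub>R zs i) z =
    (\<Sum>i\<in>I. \<Sum>j\<in>I. mu i * mu j * ip (zs i) (zs j) z)"
proof -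
  have add: "\<And>x x' y. ip (x + x') y z = ip x y z + ip x' y z"
    and sc: "\<And>a x y. ip (a *\<^sub>R x) y z = a * ip x y z"
    and cj: "\<And>x y. ip y x z = ip x y z"
    using ip unfolding two_inner_product_real_def by blast+
  have z0: "ip 0 y z = 0" for y using add[of 0 0 y] by simp
  have sl: "ip (\<Sum>i\<in>J. f i) y z = (\<Sum>i\<in>J. ip (f i) y z)" for J f y
    by (induction J rule: infinite_finite_induct) (auto simp: z0 add)
  have sr: "ip y (\<Sum>i\<in>J. f i) z = (\<Sum>i\<in>J. ip y (f i) z)" for J f y
  proof -
    have "ip y (\<Sum>i\<in>J. f i) z = ip (\<Sum>i\<in>J. f i) y z" by (rule cj)
    also have "\<dots> = (\<Sum>i\<in>J. ip (f i) y z)" by (rule sl)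
    also have "\<dots> = (\<Sum>i\<in>J. ip y (f i) z)" by (rule sum.cong[OF refl], rule cj)
    finally show ?thesis .
  qed
  have scr: "ip y (a *\<^sub>R x) z = a * ip y x z" for a x y
  proof -
    have "ip y (a *\<^sub>R x) z = ip (a *\<^sub>R x) y z" by (rule cj)
    also have "\<dots> = a * ip x y z" by (rule sc)
    also have "\<dots> = a * ip y x z" by (rule arg_cong[where f="\<lambda>t. a * t"], rule cj)
    finally show ?thesis .
  qed
  show ?thesis
    by (simp add: sl sr sc scr sum_distrib_left mult.assoc, subst sum.swap, simp add: ac_simps)
qed

lemma final_bound:
  fixes ip :: "'a \<Rightarrow> 'a \<Rightarrow> 'a \<Rightarrow> 'k::real_normed_field" and mu :: "nat \<Rightarrow> 'k"
  assumes N: "two_norm ip v z ^ 2 \<le> (\<Sum>i=1..n. norm (mu i) ^ 2 * two_norm ip (zs i) z ^ 2) +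
     (\<Sum>(i, j)\<in>offdiag n. norm (mu i) * norm (mu j) * norm (ip (zs i) (zs j) z))"
    and cs: "\<And>i j. norm (ip (zs j) (zs i) z) = norm (ip (zs i) (zs j) z)"
    and n: "n \<ge> 1"
    and al: "\<alpha> > 1" and ab: "1 / \<alpha> + 1 / \<beta> = 1"
    and ga: "\<gamma> > 1" and gd: "1 / \<gamma> + 1 / \<delta> = 1"
  shows "cor24_bound ip n zs z mu v \<alpha> \<beta> \<gamma> \<delta>"
proof -
  note d = diag_bounds[of "\<lambda>i. norm (mu i)" "\<lambda>i. two_norm ip (zs i) z", OF _ _ n al ab]
  note o = offdiag_bounds[of "\<lambda>i. norm (mu i)" "\<lambda>i j. norm (ip (zs i) (zs j) z)", OF _ _ cs n ga gd]
  have t0: "\<And>i. two_norm ip (zs i) z \<ge> 0" by (simp add: two_norm_def)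
  have d1: "(\<Sum>i=1..n. norm (mu i) ^ 2 * two_norm ip (zs i) z ^ 2) \<le> A1 ip n zs z mu"
    and d2: "(\<Sum>i=1..n. norm (mu i) ^ 2 * two_norm ip (zs i) z ^ 2) \<le> A2 ip n zs z mu \<alpha> \<beta>"
    and d3: "(\<Sum>i=1..n. norm (mu i) ^ 2 * two_norm ip (zs i) z ^ 2) \<le> A3 ip n zs z mu"
    using d t0 unfolding A1_def A2_def A3_def by auto
  have o1: "(\<Sum>(i, j)\<in>offdiag n. norm (mu i) * norm (mu j) * norm (ip (zs i) (zs j) z)) \<le> B1 ip n zs z mu"
    and o2: "(\<Sum>(i, j)\<in>offdiag n. norm (mu i) * norm (mu j) * norm (ip (zs i) (zs j) z)) \<le> B2 ip n zs z mu \<gamma> \<delta>"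
    and o3: "(\<Sum>(i, j)\<in>offdiag n. norm (mu i) * norm (mu j) * norm (ip (zs i) (zs j) z)) \<le> B3 ip n zs z mu"
    using o unfolding B1_def B2_def B3_def by auto
  show ?thesis unfolding cor24_bound_def
    using N d1 d2 d3 o1 o2 o3 by auto
qed

theorem corollary2p4:
  fixes ipR :: "'a::real_vector \<Rightarrow> 'a \<Rightarrow> 'a \<Rightarrow> real"
    and zsR :: "nat \<Rightarrow> 'a" and zR :: 'a and muR :: "nat \<Rightarrow> real"
    and scC :: "complex \<Rightarrow> 'b::ab_group_add \<Rightarrow> 'b"
    and ipC :: "'b \<Rightarrow> 'b \<Rightarrow> 'b \<Rightarrow> complex"
    and zsC :: "nat \<Rightarrow> 'b" and zC :: 'b and muC :: "nat \<Rightarrow> complex"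
    and n :: nat and \<alpha> \<beta> \<gamma> \<delta> :: real
  assumes "n \<ge> 1"
    and "\<alpha> > 1" and "1 / \<alpha> + 1 / \<beta> = 1"
    and "\<gamma> > 1" and "1 / \<gamma> + 1 / \<delta> = 1"
  shows "(two_inner_product_real ipR \<longrightarrow>
            cor24_bound ipR n zsR zR muR (\<Sum>i=1..n. muR i *\<^sub>R zsR i) \<alpha> \<beta> \<gamma> \<delta>)
       \<and> (two_inner_product_complex scC ipC \<longrightarrow>
            cor24_bound ipC n zsC zC muC (\<Sum>i=1..n. scC (muC i) (zsC i)) \<alpha> \<beta> \<gamma> \<delta>)"
proof (intro conjI impI)
  assume ip: "two_inner_product_real ipR"
  have cj: "\<And>x y. ipR y x zR = ipR x y zR"
    using ip unfolding two_inner_product_real_def by blast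
  show "cor24_bound ipR n zsR zR muR (\<Sum>i=1..n. muR i *\<^sub>R zsR i) \<alpha> \<beta> \<gamma> \<delta>"
  proof (rule final_bound)
    show "norm (ipR (zsR j) (zsR i) zR) = norm (ipR (zsR i) (zsR j) zR)" for i j
      by (simp only: cj[of "zsR i" "zsR j"])
    show "two_norm ipR (\<Sum>i=1..n. muR i *\<^sub>R zsR i) zR ^ 2 \<le> (\<Sum>i=1..n. norm (muR i) ^ 2 * two_norm ipR (zsR i) zR ^ 2) +
     (\<Sum>(i, j)\<in>offdiag n. norm (muR i) * norm (muR j) * norm (ipR (zsR i) (zsR j) zR))"
      by (subst two_norm_sq, unfold real_expand[OF ip], rule norm_double_sum_split, simp add: norm_mult abs_mult)
  qed (use assms in auto)
next
  assume ip: "two_inner_product_complex scC ipC"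
  have cj: "\<And>x y. ipC y x zC = cnj (ipC x y zC)"
    using ip unfolding two_inner_product_complex_def by blast
  show "cor24_bound ipC n zsC zC muC (\<Sum>i=1..n. scC (muC i) (zsC i)) \<alpha> \<beta> \<gamma> \<delta>"
  proof (rule final_bound)
    show "norm (ipC (zsC j) (zsC i) zC) = norm (ipC (zsC i) (zsC j) zC)" for i j
      by (simp only: cj[of "zsC i" "zsC j"] complex_mod_cnj)
    show "two_norm ipC (\<Sum>i=1..n. scC (muC i) (zsC i)) zC ^ 2 \<le> (\<Sum>i=1..n. norm (muC i) ^ 2 * two_norm ipC (zsC i) zC ^ 2) +
     (\<Sum>(i, j)\<in>offdiag n. norm (muC i) * norm (muC j) * norm (ipC (zsC i) (zsC j) zC))"
      by (subst two_norm_sq, unfold complex_expand[OF ip], rule norm_double_sum_split, simp add: norm_mult abs_mult)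
  qed (use assms in auto)
qed

end
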